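(* Let $G$ be a finite group and let $H_1, \ldots, H_{\ell}$ be proper subgroups of $G$. Suppose that $x_1, \ldots, x_m \in G$ represent distinct $G$-conjugacy classes, and that there are numbers $A_1,\dots,A_\ell$ and $B>0$ with $\sum_{i=1}^m|x_i^G \cap H_j| \leqslant A_j$ for all $j$ and $|x_i^G| \geqslant B$ for all $i$. Then for every positive integer $c$, \[ \sum_{i=1}^{m}|x_i^G|\left(\sum_{j=1}^{\ell}{\rm fpr}(x_i,G/H_j)\right)^c \leqslant B^{1-c}\left(\sum_{j=1}^{\ell}A_j\right)^c. \]
   Context: For $x\in G$ and $H<G$, ${\rm fpr}(x,G/H)=|x^G\cap H|/|x^G|$. *)

theory Defs
  imports "HOL-Algebra.Group" Complex_Main
begin

definition conj_class :: "('a, 'b) monoid_scheme \<Rightarrow> 'a \<Rightarrow> 'a set" where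
  "conj_class G x = {g \<otimes>\<^bsub>G\<^esub> x \<otimes>\<^bsub>G\<^esub> inv\<^bsub>G\<^esub> g | g. g \<in> carrier G}"

definition fpr :: "('a, 'b) monoid_scheme \<Rightarrow> 'a \<Rightarrow> 'a set \<Rightarrow> real" where
  "fpr G x H = real (card (conj_class G x \<inter> H)) / real (card (conj_class G x))"

end

theory Submission
  imports Defs
begin

lemma pow_add_ge:
  fixes s t :: real assumes "s \<ge> 0" "t \<ge> 0" "c > 0"
  shows "s ^ c + t ^ c \<le> (s + t) ^ c"
proof -
  obtain d where c: "c = Suc d" using assms(3) by (cases c) auto
  have "s ^ c + t ^ c = s ^ d * s + t ^ d * t" by (simp add: c mult.commute)
  also have "\<dots> \<le> (s+t) ^ d * s + (s+t) ^ d * t"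
    by (intro add_mono mult_right_mono power_mono) (use assms in auto)
  also have "\<dots> = (s+t)^c" by (simp add: c algebra_simps)
  finally show ?thesis .
qed

lemma sum_pow_le:
  fixes f :: "nat \<Rightarrow> real" assumes "finite S" "\<And>i. i \<in> S \<Longrightarrow> f i \<ge> 0" "c > 0"
  shows "(\<Sum>i\<in>S. f i ^ c) \<le> (\<Sum>i\<in>S. f i) ^ c"
  using assms
proof (induction S rule: finite_induct)
  case empty then show ?case by simp
next
  case (insert a F)
  have "(\<Sum>i\<in>insert a F. f i ^ c) = f a ^ c + (\<Sum>i\<in>F. f i ^ c)" using insert by simp
  also have "\<dots> \<le> f a ^ c + (\<Sum>i\<in>F. f i) ^ c" using insert by simp
  also have "\<dots> \<le> (f a + (\<Sum>i\<in>F. f i)) ^ c"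
    by (rule pow_add_ge) (use insert in \<open>auto intro: sum_nonneg\<close>)
  finally show ?case using insert by simp
qed

theorem lemma2p7:
  fixes G :: "('a, 'b) monoid_scheme"
    and H :: "nat \<Rightarrow> 'a set" and x :: "nat \<Rightarrow> 'a"
    and A :: "nat \<Rightarrow> real" and B :: real and l m c :: nat
  assumes "group G" and "finite (carrier G)"
    and "\<And>j. j \<in> {1..l} \<Longrightarrow> subgroup (H j) G \<and> H j \<noteq> carrier G"
    and "\<And>i. i \<in> {1..m} \<Longrightarrow> x i \<in> carrier G"
    and "\<And>i k. i \<in> {1..m} \<Longrightarrow> k \<in> {1..m} \<Longrightarrow> i \<noteq> k \<Longrightarrow> conj_class G (x i) \<noteq> conj_class G (x k)"
    and "B > 0"
    and "\<And>j. j \<in> {1..l} \<Longrightarrow> (\<Sum>i=1..m. real (card (conj_class G (x i) \<inter> H j))) \<le> A j"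
    and "\<And>i. i \<in> {1..m} \<Longrightarrow> real (card (conj_class G (x i))) \<ge> B"
    and "c > 0"
  shows "(\<Sum>i=1..m. real (card (conj_class G (x i))) * (\<Sum>j=1..l. fpr G (x i) (H j)) ^ c)
         \<le> B powr (1 - real c) * (\<Sum>j=1..l. A j) ^ c"
proof -
  define n where "n i = real (card (conj_class G (x i)))" for i
  define a where "a i = (\<Sum>j=1..l. real (card (conj_class G (x i) \<inter> H j)))" for i
  have a0: "a i \<ge> 0" for i unfolding a_def by (rule sum_nonneg) simp
  have Bp: "B powr (1 - real c) = 1 / B ^ (c - 1)"
    using assms(6,9) by (simp add: powr_diff powr_realpow of_nat_diff[symmetric] powr_minus_divide
        flip: powr_realpow)
  have step: "n i * (\<Sum>j=1..l. fpr G (x i) (H j)) ^ c \<le> B powr (1 - real c) * a i ^ c"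
    if i: "i \<in> {1..m}" for i
  proof -
    have nB: "n i \<ge> B" using assms(8)[OF i] by (simp add: n_def)
    hence np: "n i > 0" using assms(6) by linarith
    have "(\<Sum>j=1..l. fpr G (x i) (H j)) = a i / n i"
      by (simp add: fpr_def a_def n_def sum_divide_distrib)
    moreover obtain d where c: "c = Suc d" using assms(9) by (cases c) auto
    ultimately have "n i * (\<Sum>j=1..l. fpr G (x i) (H j)) ^ c = n i * (a i / n i) ^ Suc d"
      by simp
    also have "\<dots> = a i ^ c / n i ^ d"
      using np c by (simp add: power_divide del: power_Suc) (simp add: field_simps)
    also have "\<dots> \<le> a i ^ c / B ^ d"
      by (rule divide_left_mono) (use a0 nB assms(6) in \<open>auto intro: power_mono\<close>)
    also have "\<dots> = B powr (1 - real c) * a i ^ c" using Bp c by simp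
    finally show ?thesis .
  qed
  have "(\<Sum>i=1..m. n i * (\<Sum>j=1..l. fpr G (x i) (H j)) ^ c) \<le> (\<Sum>i=1..m. B powr (1 - real c) * a i ^ c)"
    by (rule sum_mono) (rule step)
  also have "\<dots> = B powr (1 - real c) * (\<Sum>i=1..m. a i ^ c)" by (simp add: sum_distrib_left)
  also have "\<dots> \<le> B powr (1 - real c) * (\<Sum>i=1..m. a i) ^ c"
    by (rule mult_left_mono) (use a0 assms(9) in \<open>auto intro: sum_pow_le\<close>)
  also have "\<dots> \<le> B powr (1 - real c) * (\<Sum>j=1..l. A j) ^ c"
  proof (rule mult_left_mono)
    have "(\<Sum>i=1..m. a i) = (\<Sum>j=1..l. \<Sum>i=1..m. real (card (conj_class G (x i) \<inter> H j)))"
      unfolding a_def by (rule sum.swap)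
    also have "\<dots> \<le> (\<Sum>j=1..l. A j)" by (rule sum_mono) (rule assms(7))
    finally show "(\<Sum>i=1..m. a i) ^ c \<le> (\<Sum>j=1..l. A j) ^ c"
      by (rule power_mono) (auto intro: sum_nonneg a0)
  qed simp
  finally show ?thesis by (simp add: n_def)
qed

end
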